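(* Let $\mathcal{M}\subseteq\mathbb{N}_0$ and let $k=\min(\mathcal{M})$ if $\mathcal{M}\ne\varnothing$ and $k=0$ otherwise. Then $\lim_{i\to\infty}\mathcal{M}^i=\mathcal{M}_k$, where $\mathcal{M}_0=\varnothing$ and, for $k\ge1$, $\mathcal{M}_k=\{ip_k+j:\ i\in\mathbb{N}_0,\ k\le j\le 2k-1\}$ with $p_k=3k-1$.
   Context: A one-heap game is a set $\mathcal{M}\subseteq\mathbb{N}_0$ of moves; from position $x\in\mathbb{N}_0$ one may move to $y\in\mathbb{N}_0$ iff $x-y\in\mathcal{M}$. Misère play: a player who cannot move wins. If $0\in\mathcal{M}$, $P(\mathcal{M})=\varnothing$. Otherwise: a position is an N-position if it has no option or some option is a P-position; otherwise it is a P-position; $P(\mathcal{M})$ denotes the set of P-positions. $\mathcal{M}^\star=P(\mathcal{M})$, $\mathcal{M}^0=\mathcal{M}$, $\mathcal{M}^i=(\mathcal{M}^{i-1})^\star$, and $\lim_i\mathcal{M}^i$ is the pointwise limit: the set of $x$ with $x\in\mathcal{M}^i$ for all sufficiently large $i$, where every $x$ is eventually always in or eventually always out of $\mathcal{M}^i$. *)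

theory Defs
  imports Main
begin

text \<open>Misere one-heap game with move set M.\<close>

function isP :: "nat set \<Rightarrow> nat \<Rightarrow> bool" where
  "isP M x = ((\<exists>m\<in>M. m \<le> x) \<and>
              (\<forall>m. m \<in> M \<and> 0 < m \<and> m \<le> x \<longrightarrow> \<not> isP M (x - m)))"
  by auto
termination by (relation "measure snd") auto

declare isP.simps [simp del]

definition Ppos :: "nat set \<Rightarrow> nat set" where
  "Ppos M = (if 0 \<in> M then {} else {x. isP M x})"

definition iterM :: "nat set \<Rightarrow> nat \<Rightarrow> nat set" where
  "iterM M i = (Ppos ^^ i) M"

definition is_pointwise_limit :: "(nat \<Rightarrow> nat set) \<Rightarrow> nat set \<Rightarrow> bool" where
  "is_pointwise_limit S L = (\<forall>x. \<exists>i0. \<forall>i\<ge>i0. (x \<in> S i \<longleftrightarrow> x \<in> L))"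

definition minmove :: "nat set \<Rightarrow> nat" where
  "minmove M = (if M = {} then 0 else (LEAST m. m \<in> M))"

definition Mk :: "nat \<Rightarrow> nat set" where
  "Mk k = (if k = 0 then {} else
      {i * (3 * k - 1) + j | i j. k \<le> j \<and> j \<le> 2 * k - 1})"

end

theory Submission
  imports Defs
begin

lemma isP_below:
  assumes "\<forall>y<k. y \<notin> S" "x < k"
  shows "\<not> isP S x"
  using assms by (subst isP.simps) auto

lemma isP_agree:
  assumes k1: "1 \<le> k" and kS: "k \<in> S" and bS: "\<forall>y<k. y \<notin> S"
    and kT: "k \<in> T" and bT: "\<forall>y<k. y \<notin> T"
  shows "(\<forall>y. k \<le> y \<longrightarrow> y + k \<le> x \<longrightarrow> (y \<in> S \<longleftrightarrow> y \<in> T)) \<Longrightarrow> isP S x = isP T x"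
proof (induction x rule: less_induct)
  case (less x)
  show ?case
  proof (cases "x < k")
    case True
    then show ?thesis using isP_below[OF bS] isP_below[OF bT] by blast
  next
    case False
    have ex: "(\<exists>m\<in>S. m \<le> x)" "(\<exists>m\<in>T. m \<le> x)" using False kS kT not_less by blast+
    have eq: "(\<forall>m. m \<in> S \<and> 0 < m \<and> m \<le> x \<longrightarrow> \<not> isP S (x - m)) \<longleftrightarrow>
              (\<forall>m. m \<in> T \<and> 0 < m \<and> m \<le> x \<longrightarrow> \<not> isP T (x - m))"
    proof -
      have "(m \<in> S \<and> 0 < m \<and> m \<le> x \<longrightarrow> \<not> isP S (x - m)) \<longleftrightarrow>
            (m \<in> T \<and> 0 < m \<and> m \<le> x \<longrightarrow> \<not> isP T (x - m))" for m
      proof (cases "x - m < k")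
        case True
        then show ?thesis using isP_below[OF bS] isP_below[OF bT] by blast
      next
        case c: False
        show ?thesis
        proof (cases "0 < m \<and> m \<le> x")
          case mx: True
          have mem: "m \<in> S \<longleftrightarrow> m \<in> T"
          proof (cases "k \<le> m")
            case True
            then show ?thesis using less.prems c mx by auto
          next
            case False
            then show ?thesis using bS bT by auto
          qed
          have "isP S (x - m) = isP T (x - m)"
            apply (rule less.IH)
            using mx apply simp
            using less.prems mx by auto
          then show ?thesis using mem by auto
        next
          case False
          then show ?thesis by auto
        qed
      qed
      then show ?thesis by blast
    qed
    show ?thesis
      apply (subst isP.simps) apply (subst (2) isP.simps)
      using ex eq by blast
  qed
qed

definition hasmin :: "nat set \<Rightarrow> nat \<Rightarrow> bool" where
  "hasmin S k = (k \<in> S \<and> (\<forall>y<k. y \<notin> S))"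

definition agree :: "nat set \<Rightarrow> nat set \<Rightarrow> nat \<Rightarrow> bool" where
  "agree S T n = (\<forall>y\<le>n. y \<in> S \<longleftrightarrow> y \<in> T)"

lemma Ppos_hasmin:
  assumes "1 \<le> k" "hasmin S k"
  shows "hasmin (Ppos S) k"
proof -
  have z: "0 \<notin> S" using assms unfolding hasmin_def by (cases "k = 0") auto
  have b: "\<forall>y<k. y \<notin> S" "k \<in> S" using assms unfolding hasmin_def by auto
  have "isP S k"
    apply (subst isP.simps)
  proof (intro conjI allI impI)
    show "\<exists>m\<in>S. m \<le> k" using b by auto
  next
    fix m assume m: "m \<in> S \<and> 0 < m \<and> m \<le> k"
    hence "m = k" using b(1) by (meson le_antisym not_less)
    then show "\<not> isP S (k - m)" using isP_below[OF b(1)] m by auto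
  qed
  moreover have "\<forall>y<k. \<not> isP S y" using isP_below[OF b(1)] by blast
  ultimately show ?thesis using z unfolding hasmin_def Ppos_def by auto
qed

lemma Ppos_agree:
  assumes "1 \<le> k" "hasmin S k" "hasmin T k" "agree S T n"
  shows "agree (Ppos S) (Ppos T) (n + k)"
proof -
  have z: "0 \<notin> S" "0 \<notin> T" using assms unfolding hasmin_def by (cases "k = 0", auto)+
  have "isP S x = isP T x" if "x \<le> n + k" for x
    apply (rule isP_agree[of k])
    using assms that unfolding hasmin_def agree_def by auto
  then show ?thesis using z unfolding agree_def Ppos_def by auto
qed

lemma Mk_mem:
  assumes "1 \<le> k"
  shows "x \<in> Mk k \<longleftrightarrow> (\<exists>i j. x = i * (3 * k - 1) + j \<and> k \<le> j \<and> j \<le> 2 * k - 1)"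
  using assms unfolding Mk_def by auto

lemma Mk_fix:
  assumes k1: "1 \<le> k"
  shows "isP (Mk k) x \<longleftrightarrow> x \<in> Mk k"
proof (induction x rule: less_induct)
  case (less x)
  define p where "p = 3 * k - 1"
  have p: "p = 3 * k - 1" "2 * k \<le> p" using k1 p_def by auto
  have mem: "y \<in> Mk k \<longleftrightarrow> (\<exists>i j. y = i * p + j \<and> k \<le> j \<and> j \<le> 2 * k - 1)" for y
    using Mk_mem[OF k1] p_def by simp
  have memI: "i * p + j \<in> Mk k" if "k \<le> j" "j \<le> 2 * k - 1" for i j
    using mem that by blast
  have memE: "\<exists>i j. y = i * p + j \<and> k \<le> j \<and> j \<le> 2 * k - 1" if "y \<in> Mk k" for y
    using mem that by blast
  have low: "\<forall>y<k. y \<notin> Mk k"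
  proof (intro allI impI notI)
    fix y assume "y < k" "y \<in> Mk k"
    then show False using memE[of y] by auto
  qed
  have kin: "k \<in> Mk k" using memI[of k 0] k1 by simp
  show ?case
  proof (cases "x < k")
    case True
    then show ?thesis using isP_below[OF low] low by blast
  next
    case xk: False
    have ex: "\<exists>m\<in>Mk k. m \<le> x" using kin xk not_less by blast
    show ?thesis
    proof (cases "x \<in> Mk k")
      case True
      then obtain a r where x: "x = a * p + r" "k \<le> r" "r \<le> 2 * k - 1" using memE by blast
      have "\<not> isP (Mk k) (x - m)" if m: "m \<in> Mk k" "0 < m" "m \<le> x" for m
      proof
        assume "isP (Mk k) (x - m)"
        hence "x - m \<in> Mk k" using less.IH m by auto
        then obtain c t where t: "x - m = c * p + t" "k \<le> t" "t \<le> 2 * k - 1" using memE by blast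
        obtain b s where s: "m = b * p + s" "k \<le> s" "s \<le> 2 * k - 1" using m memE by blast
        have e: "a * p + r = (b + c) * p + (s + t)" using x s t m(3) by (simp add: algebra_simps)
        have lt1: "r < s + t" using k1 x s t by linarith
        have lt2: "s + t < p + r" using k1 x s t p by linarith
        show False
        proof (cases "a \<le> b + c")
          case True
          hence "a * p \<le> (b + c) * p" by (rule mult_le_mono1)
          then show False using e lt1 by linarith
        next
          case False
          hence "(b + c + 1) * p \<le> a * p" by (intro mult_le_mono1) auto
          then show False using e lt2 by (simp add: algebra_simps)
        qed
      qed
      then show ?thesis
        apply (subst isP.simps) using ex True by blast
    next
      case False
      define a where "a = x div p"
      define r where "r = x mod p"
      have x: "x = a * p + r" "r < p" using p k1 unfolding a_def r_def
        by (simp_all add: div_mult_mod_eq[symmetric])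
      have r: "r < k \<or> 2 * k \<le> r"
      proof (rule ccontr)
        assume "\<not> (r < k \<or> 2 * k \<le> r)"
        hence "k \<le> r" "r \<le> 2 * k - 1" by auto
        hence "x \<in> Mk k" using memI[of r a] x(1) by simp
        then show False using False by simp
      qed
      have "\<exists>m. m \<in> Mk k \<and> 0 < m \<and> m \<le> x \<and> x - m \<in> Mk k"
      proof (cases "2 * k \<le> r")
        case True
        have "a * p + (r - k) \<in> Mk k" using memI[of "r - k" a] True x p by simp
        moreover have "x - (a * p + (r - k)) = k" using x True by simp
        moreover have "0 < a * p + (r - k)" using True k1 by simp
        ultimately show ?thesis using kin x by (intro exI[of _ "a * p + (r - k)"]) auto
      next
        case False
        hence rk: "r < k" using r by auto
        have a0: "a \<noteq> 0"
        proof
          assume "a = 0" then show False using x xk rk by simp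
        qed
        then obtain a' where a': "a = Suc a'" by (cases a) auto
        have x2: "x = a' * p + (r + k) + (2 * k - 1)" using x a' p k1 by simp
        have "a' * p + (r + k) \<in> Mk k" using memI[of "r + k" a'] rk by simp
        moreover have "2 * k - 1 \<in> Mk k" using memI[of "2 * k - 1" 0] k1 by simp
        ultimately show ?thesis using x2 k1 by (intro exI[of _ "a' * p + (r + k)"]) auto
      qed
      then obtain m where "m \<in> Mk k" "0 < m" "m \<le> x" "x - m \<in> Mk k" by blast
      moreover have "isP (Mk k) (x - m)" using less.IH calculation by auto
      ultimately show ?thesis apply (subst isP.simps) using False by blast
    qed
  qed
qed

lemma Ppos_Mk: "1 \<le> k \<Longrightarrow> Ppos (Mk k) = Mk k"
proof -
  assume k: "1 \<le> k"
  have "0 \<notin> Mk k"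
  proof
    assume "0 \<in> Mk k"
    then obtain i j where "0 = i * (3 * k - 1) + j" "k \<le> j" unfolding Mk_mem[OF k] by blast
    then show False using k by simp
  qed
  then show ?thesis using Mk_fix[OF k] unfolding Ppos_def by auto
qed

lemma isP_empty: "\<not> isP {} x"
  by (subst isP.simps) simp

lemma Mk_hasmin: "1 \<le> k \<Longrightarrow> hasmin (Mk k) k"
proof -
  assume k1: "1 \<le> k"
  have "k = 0 * (3 * k - 1) + k" "k \<le> 2 * k - 1" using k1 by auto
  hence "k \<in> Mk k" unfolding Mk_mem[OF k1] by blast
  moreover have "y \<notin> Mk k" if "y < k" for y
  proof
    assume "y \<in> Mk k"
    then obtain i j where "y = i * (3 * k - 1) + j" "k \<le> j" unfolding Mk_mem[OF k1] by blast
    then show False using that by simp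
  qed
  ultimately show ?thesis unfolding hasmin_def by blast
qed

theorem corollary7:
  fixes M :: "nat set"
  shows "is_pointwise_limit (iterM M) (Mk (minmove M))"
proof (cases "M = {} \<or> 0 \<in> M")
  case True
  have "minmove M = 0"
  proof (cases "M = {}")
    case False
    hence "0 \<in> M" using True by blast
    hence "(LEAST m. m \<in> M) = 0" by (rule Least_eq_0)
    then show ?thesis unfolding minmove_def by simp
  qed (simp add: minmove_def)
  hence mm: "Mk (minmove M) = {}" unfolding Mk_def by simp
  have e: "Ppos {} = {}" unfolding Ppos_def using isP_empty by simp
  have h: "iterM M (Suc i) = {}" for i
  proof (induction i)
    case 0
    show ?case
    proof (cases "M = {}")
      case True
      then show ?thesis using e unfolding iterM_def by simp
    next
      case False
      hence "0 \<in> M" using \<open>M = {} \<or> 0 \<in> M\<close> by blast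
      then show ?thesis unfolding iterM_def Ppos_def by simp
    qed
  next
    case (Suc i)
    have "iterM M (Suc (Suc i)) = Ppos (iterM M (Suc i))" unfolding iterM_def by simp
    then show ?case using e Suc by simp
  qed
  have "\<forall>i\<ge>1. (x \<in> iterM M i \<longleftrightarrow> x \<in> Mk (minmove M))" for x
  proof (intro allI impI)
    fix i :: nat assume "1 \<le> i"
    then obtain j where "i = Suc j" by (cases i) auto
    then show "x \<in> iterM M i \<longleftrightarrow> x \<in> Mk (minmove M)" using h mm by simp
  qed
  then show ?thesis unfolding is_pointwise_limit_def by blast
next
  case False
  define k where "k = minmove M"
  have ne: "M \<noteq> {}" using False by blast
  have kdef: "k = (LEAST m. m \<in> M)" using ne unfolding k_def minmove_def by simp
  obtain m0 where "m0 \<in> M" using ne by blast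
  have kM1: "k \<in> M" unfolding kdef by (rule LeastI) (rule \<open>m0 \<in> M\<close>)
  have kM2: "\<forall>y<k. y \<notin> M" unfolding kdef using not_less_Least by blast
  have k1: "1 \<le> k"
  proof (rule ccontr)
    assume "\<not> 1 \<le> k" hence "k = 0" by simp
    then show False using kM1 False by simp
  qed
  have hm: "hasmin M k" using kM1 kM2 unfolding hasmin_def by blast
  have hMk: "hasmin (Mk k) k" by (rule Mk_hasmin[OF k1])
  have step: "hasmin (iterM M i) k \<and> agree (iterM M i) (Mk k) (k + i * k)" for i
  proof (induction i)
    case 0
    have "agree M (Mk k) k" unfolding agree_def
    proof (intro allI impI)
      fix y assume "y \<le> k"
      then show "y \<in> M \<longleftrightarrow> y \<in> Mk k"
        using hm hMk unfolding hasmin_def by (cases "y = k") auto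
    qed
    then show ?case using hm unfolding iterM_def by simp
  next
    case (Suc i)
    have it: "iterM M (Suc i) = Ppos (iterM M i)" unfolding iterM_def by simp
    have h1: "hasmin (iterM M (Suc i)) k" unfolding it using Ppos_hasmin[OF k1] Suc by blast
    have "agree (Ppos (iterM M i)) (Ppos (Mk k)) (k + i * k + k)"
      using Ppos_agree[OF k1 _ hMk] Suc by blast
    hence "agree (iterM M (Suc i)) (Mk k) (k + Suc i * k)"
      unfolding it Ppos_Mk[OF k1] by (simp add: add.commute add.left_commute)
    then show ?case using h1 by blast
  qed
  have "\<forall>i\<ge>x. (x \<in> iterM M i \<longleftrightarrow> x \<in> Mk k)" for x
  proof (intro allI impI)
    fix i assume "x \<le> i"
    have "i \<le> i * k" using k1 by simp
    hence "x \<le> k + i * k" using \<open>x \<le> i\<close> by linarith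
    then show "x \<in> iterM M i \<longleftrightarrow> x \<in> Mk k" using step[of i] unfolding agree_def by blast
  qed
  then show ?thesis unfolding is_pointwise_limit_def k_def by blast
qed

end
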